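(* Let $(z_n)_{n\ge0}$ be a homogeneous Markov chain on $\mathbb{Z}_+^k$ satisfying assumptions (A1) and (A2) below, with associated maps $p_w$ and distribution process $(x_n)$. Let $K\subset S_k$ be compact. If $$\lambda=\inf_{x\in K}\sum_w p_w(x)\,\alpha(w)>0,$$ then almost surely on the event $\{L(\{x_n\}_{n\ge0})\subset K\}\cap\{\lim_{n\to\infty}|z_n|=\infty\}$ we have $\liminf_{n\to\infty}\frac{|z_n|}{n}\ge\lambda$.
   Context: Fix integers $k\ge1$, $m\ge1$. For $w\in\mathbb{Z}^k$, $|w|=\sum_i|w^i|$, $\alpha(w)=\sum_iw^i$; sums over $w$ range over $w\in\mathbb{Z}^k$ with $|w|\le m$. $\mathbb{Z}_+^k=\{z\in\mathbb{Z}^k:z^i\ge0\}$, $S_k=\{x\in\mathbb{R}^k:x^i\ge0,\sum_ix^i=1\}$. $(z_n)$ has transition kernel $\Pi(z,z')=P[z_{n+1}=z'\mid z_n=z]$; $x_n=z_n/|z_n|$ if $z_n\ne0$, else $x_n=0$. (A1) $|z_{n+1}-z_n|\le m$ for all $n$. (A2) There exist Lipschitz maps $p_w:S_k\to[0,1]$ ($|w|\le m$) and $a>0$ with $|p_w(z/|z|)-\Pi(z,z+w)|\le a/|z|$ for all nonzero $z\in\mathbb{Z}_+^k$, $|w|\le m$. $L(\{x_n\})$ is the set of limit points of $(x_n)$. *)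

theory Defs
  imports "HOL-Probability.Probability"
begin

text \<open>The lattice \<open>\<int>\<^sup>k\<close> is modelled as \<open>int ^ 'k\<close> for a finite index type \<open>'k\<close> (so \<open>k = CARD('k) \<ge> 1\<close>).\<close>

definition l1 :: "int ^ 'k::finite \<Rightarrow> int" where
  "l1 w = (\<Sum>i\<in>UNIV. \<bar>w $ i\<bar>)"

definition alpha :: "int ^ 'k::finite \<Rightarrow> int" where
  "alpha w = (\<Sum>i\<in>UNIV. w $ i)"

definition Zplus :: "(int ^ 'k::finite) set" where
  "Zplus = {z. \<forall>i. 0 \<le> z $ i}"

definition Sk :: "(real ^ 'k::finite) set" where
  "Sk = {x. (\<forall>i. 0 \<le> x $ i) \<and> (\<Sum>i\<in>UNIV. x $ i) = 1}"

definition steps :: "nat \<Rightarrow> (int ^ 'k::finite) set" where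
  "steps m = {w. l1 w \<le> int m}"

definition distr :: "int ^ 'k::finite \<Rightarrow> real ^ 'k" where
  "distr z = (if z = 0 then 0 else (\<chi> i. real_of_int (z $ i) / real_of_int (l1 z)))"

definition limit_points :: "(nat \<Rightarrow> 'a::topological_space) \<Rightarrow> 'a set" where
  "limit_points x = {l. \<exists>r. strict_mono r \<and> (x \<circ> r) \<longlonglongrightarrow> l}"

text \<open>\<open>z\<close> is a homogeneous Markov chain on the countable state space with transition
  kernel \<open>\<Pi>\<close> (\<open>\<Pi>(z,z') = pmf (Pk z) z'\<close>): elementary Markov property.\<close>
definition markov_chain :: "'a measure \<Rightarrow> (nat \<Rightarrow> 'a \<Rightarrow> 's) \<Rightarrow> ('s \<Rightarrow> 's pmf) \<Rightarrow> bool" where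
  "markov_chain M z Pk \<longleftrightarrow> prob_space M \<and>
     (\<forall>n. z n \<in> measurable M (count_space UNIV)) \<and>
     (\<forall>n (h :: nat \<Rightarrow> 's) y.
        measure M {\<omega>\<in>space M. (\<forall>i\<le>n. z i \<omega> = h i) \<and> z (Suc n) \<omega> = y}
        = pmf (Pk (h n)) y * measure M {\<omega>\<in>space M. \<forall>i\<le>n. z i \<omega> = h i})"

end

theory Submission
  imports Defs
begin


lemma meas_pair_cs:
  fixes X :: "'a \<Rightarrow> 'b::countable" and Y :: "'a \<Rightarrow> 'c::countable"
  assumes "X \<in> measurable M (count_space UNIV)" "Y \<in> measurable M (count_space UNIV)"
  shows "(\<lambda>\<omega>. F (X \<omega>) (Y \<omega>) :: 'd::countable) \<in> measurable M (count_space UNIV)"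
proof -
  have "(\<lambda>\<omega>. (X \<omega>, Y \<omega>)) \<in> measurable M (count_space UNIV)"
    unfolding measurable_count_space_eq2_countable
  proof safe
    fix a b
    have "(\<lambda>\<omega>. (X \<omega>, Y \<omega>)) -` {(a,b)} \<inter> space M = (X -` {a} \<inter> space M) \<inter> (Y -` {b} \<inter> space M)"
      by auto
    moreover have "X -` {a} \<inter> space M \<in> sets M" "Y -` {b} \<inter> space M \<in> sets M"
      using assms by (auto simp: measurable_count_space_eq2_countable)
    ultimately show "(\<lambda>\<omega>. (X \<omega>, Y \<omega>)) -` {(a,b)} \<inter> space M \<in> sets M" by auto
  qed auto
  then have "(\<lambda>\<omega>. (\<lambda>p. F (fst p) (snd p)) (X \<omega>, Y \<omega>)) \<in> measurable M (count_space UNIV)"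
    by (rule measurable_compose) simp
  then show ?thesis by simp
qed

lemma lemmaA:
  fixes X :: "'a \<Rightarrow> 'b::countable" and F :: "'b \<Rightarrow> real"
  assumes P: "prob_space M" and X: "X \<in> measurable M (count_space UNIV)" and B: "B \<in> sets M"
  shows "(\<integral>\<omega>. F (X \<omega>) * indicator B \<omega> \<partial>M)
       = (\<integral>l. measure M (X -` {l} \<inter> space M \<inter> B) * F l \<partial>count_space UNIV)"
proof -
  interpret prob_space M by fact
  let ?MB = "density M (indicator B :: 'a \<Rightarrow> real)"
  let ?mu = "\<lambda>l. measure M (X -` {l} \<inter> space M \<inter> B)"
  have Xm: "X \<in> measurable ?MB (count_space UNIV)" using X by simp
  have eq: "Measure_Space.distr ?MB (count_space UNIV) X = density (count_space UNIV) ?mu"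
  proof (rule measure_eqI_countable[where A=UNIV])
    fix l :: 'b
    have s: "X -` {l} \<inter> space M \<in> sets M" using X by (auto simp: measurable_count_space_eq2_countable)
    have "emeasure (Measure_Space.distr ?MB (count_space UNIV) X) {l} = emeasure ?MB (X -` {l} \<inter> space M)"
      using Xm by (simp add: emeasure_distr)
    also have "\<dots> = (\<integral>\<^sup>+x. ennreal (indicator B x) * indicator (X -` {l} \<inter> space M) x \<partial>M)"
      using s B by (simp add: emeasure_density)
    also have "\<dots> = (\<integral>\<^sup>+x. indicator (X -` {l} \<inter> space M \<inter> B) x \<partial>M)"
      by (intro nn_integral_cong) (auto split: split_indicator)
    also have "\<dots> = emeasure M (X -` {l} \<inter> space M \<inter> B)"
      using s B by (intro nn_integral_indicator) auto
    also have "\<dots> = ?mu l" using s B by (simp add: emeasure_eq_measure)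
    also have "\<dots> = emeasure (density (count_space UNIV) ?mu) {l}"
      by (simp add: emeasure_density nn_integral_count_space_indicator)
    finally show "emeasure (Measure_Space.distr ?MB (count_space UNIV) X) {l} = emeasure (density (count_space UNIV) ?mu) {l}" .
  qed auto
  have "(\<integral>\<omega>. F (X \<omega>) * indicator B \<omega> \<partial>M) = (\<integral>\<omega>. indicator B \<omega> *\<^sub>R F (X \<omega>) \<partial>M)"
    by (simp add: mult.commute)
  also have "\<dots> = integral\<^sup>L ?MB (\<lambda>\<omega>. F (X \<omega>))"
    using B X by (subst integral_density) auto
  also have "\<dots> = integral\<^sup>L (Measure_Space.distr ?MB (count_space UNIV) X) F"
    using Xm by (subst integral_distr) auto
  also have "\<dots> = integral\<^sup>L (density (count_space UNIV) ?mu) F"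
    by (simp add: eq)
  also have "\<dots> = (\<integral>l. ?mu l * F l \<partial>count_space UNIV)"
    by (subst integral_density) auto
  finally show ?thesis .
qed



locale mc =
  fixes M :: "'a measure" and z :: "nat \<Rightarrow> 'a \<Rightarrow> int ^ 'k::finite" and Pk :: "int ^ 'k \<Rightarrow> (int ^ 'k) pmf"
    and W :: "(int ^ 'k) set"
  assumes chain: "markov_chain M z Pk" and finW: "finite W"
begin

lemma prob: "prob_space M" using chain by (simp add: markov_chain_def)

sublocale prob_space M by (rule prob)

lemma zm: "z n \<in> measurable M (count_space UNIV)" using chain by (simp add: markov_chain_def)

lemma cyl: "measure M {\<omega>\<in>space M. (\<forall>i\<le>n. z i \<omega> = h i) \<and> z (Suc n) \<omega> = y}
        = pmf (Pk (h n)) y * measure M {\<omega>\<in>space M. \<forall>i\<le>n. z i \<omega> = h i}"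
  using chain by (simp add: markov_chain_def)

definition L :: "nat \<Rightarrow> 'a \<Rightarrow> (int ^ 'k) list" where
  "L n \<omega> = map (\<lambda>i. z i \<omega>) [0..<Suc n]"

lemma L_meas: "L n \<in> measurable M (count_space UNIV)"
proof (induction n)
  case 0
  have "(\<lambda>\<omega>. (\<lambda>a b. [a]) (z 0 \<omega>) (z 0 \<omega>)) \<in> measurable M (count_space UNIV)"
    by (rule meas_pair_cs[OF zm zm])
  then show ?case by (simp add: L_def)
next
  case (Suc n)
  have "(\<lambda>\<omega>. (\<lambda>a b. a @ [b]) (L n \<omega>) (z (Suc n) \<omega>)) \<in> measurable M (count_space UNIV)"
    by (rule meas_pair_cs[OF Suc zm])
  then show ?case by (simp add: L_def)
qed

lemma L_nth: "k \<le> n \<Longrightarrow> L n \<omega> ! k = z k \<omega>"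
  unfolding L_def by (simp del: upt_Suc add: nth_map_upt)

lemma L_last: "last (L n \<omega>) = z n \<omega>"
  unfolding L_def by simp

lemma L_length: "length (L n \<omega>) = Suc n"
  unfolding L_def by simp

lemma L_eq: "length l = Suc n \<Longrightarrow> (L n \<omega> = l) \<longleftrightarrow> (\<forall>i\<le>n. z i \<omega> = l ! i)"
  unfolding L_def list_eq_iff_nth_eq by (auto simp del: upt_Suc simp: nth_map_upt)

lemma fun_meas: "X \<in> measurable M (count_space UNIV) \<Longrightarrow> (\<lambda>\<omega>. F (X \<omega>) :: real) \<in> borel_measurable M"
  by (erule measurable_compose) simp

lemma fun_int: "X \<in> measurable M (count_space UNIV) \<Longrightarrow> (\<And>x. \<bar>F x\<bar> \<le> B) \<Longrightarrow> integrable M (\<lambda>\<omega>. F (X \<omega>) :: real)"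
  by (rule integrable_const_bound[where B=B]) (auto intro: fun_meas)

definition fD :: "int ^ 'k \<Rightarrow> int ^ 'k \<Rightarrow> real" where
  "fD y y' = (\<Sum>w\<in>W. indicator {w} (y' - y) * real_of_int (alpha w))"

definition G :: "int ^ 'k \<Rightarrow> real" where
  "G y = (\<Sum>w\<in>W. pmf (Pk y) (y + w) * real_of_int (alpha w))"

definition D :: "nat \<Rightarrow> 'a \<Rightarrow> real" where
  "D n \<omega> = fD (z n \<omega>) (z (Suc n) \<omega>) - G (z n \<omega>)"

definition AA :: real where "AA = (\<Sum>w\<in>W. \<bar>real_of_int (alpha w)\<bar>)"

lemma AA_nonneg: "0 \<le> AA" unfolding AA_def by (simp add: sum_nonneg)

lemma fD_bound: "\<bar>fD y y'\<bar> \<le> AA"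
  unfolding fD_def AA_def
  by (rule order_trans[OF sum_abs], rule sum_mono) (auto simp: abs_mult indicator_def)

lemma G_bound: "\<bar>G y\<bar> \<le> AA"
  unfolding G_def AA_def
  by (rule order_trans[OF sum_abs], rule sum_mono) (auto simp: abs_mult intro!: mult_left_le_one_le pmf_le_1)

lemma D_bound: "\<bar>D n \<omega>\<bar> \<le> 2 * AA"
  using fD_bound[of "z n \<omega>" "z (Suc n) \<omega>"] G_bound[of "z n \<omega>"] unfolding D_def by linarith

lemma Bw_sets: "{\<omega>\<in>space M. z (Suc n) \<omega> - z n \<omega> = w} \<in> sets M"
proof -
  have "(\<lambda>\<omega>. (\<lambda>a b. b - a) (z n \<omega>) (z (Suc n) \<omega>)) \<in> measurable M (count_space UNIV)"
    by (rule meas_pair_cs[OF zm zm])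
  then have "(\<lambda>\<omega>. z (Suc n) \<omega> - z n \<omega>) -` {w} \<inter> space M \<in> sets M"
    by (simp add: measurable_count_space_eq2_countable)
  moreover have "(\<lambda>\<omega>. z (Suc n) \<omega> - z n \<omega>) -` {w} \<inter> space M = {\<omega>\<in>space M. z (Suc n) \<omega> - z n \<omega> = w}"
    by auto
  ultimately show ?thesis by simp
qed

lemma key_w:
  assumes bnd: "\<And>l. \<bar>\<Phi> l\<bar> \<le> B"
  shows "(\<integral>\<omega>. \<Phi> (L n \<omega>) * indicator {\<omega>\<in>space M. z (Suc n) \<omega> - z n \<omega> = w} \<omega> \<partial>M)
       = (\<integral>\<omega>. \<Phi> (L n \<omega>) * pmf (Pk (z n \<omega>)) (z n \<omega> + w) \<partial>M)"
proof -
  let ?B = "{\<omega>\<in>space M. z (Suc n) \<omega> - z n \<omega> = w}"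
  let ?q = "\<lambda>l. pmf (Pk (last l)) (last l + w)"
  have "(\<integral>\<omega>. \<Phi> (L n \<omega>) * indicator ?B \<omega> \<partial>M)
       = (\<integral>l. measure M (L n -` {l} \<inter> space M \<inter> ?B) * \<Phi> l \<partial>count_space UNIV)"
    by (rule lemmaA[OF prob L_meas Bw_sets])
  also have "\<dots> = (\<integral>l. measure M (L n -` {l} \<inter> space M \<inter> space M) * (\<Phi> l * ?q l) \<partial>count_space UNIV)"
  proof (rule Bochner_Integration.integral_cong[OF refl])
    fix l :: "(int ^ 'k) list"
    show "measure M (L n -` {l} \<inter> space M \<inter> ?B) * \<Phi> l =
          measure M (L n -` {l} \<inter> space M \<inter> space M) * (\<Phi> l * ?q l)"
    proof (cases "length l = Suc n")
      case True
      have lastl: "last l = l ! n" using True by (subst last_conv_nth) auto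
      have e1: "L n -` {l} \<inter> space M \<inter> ?B = {\<omega>\<in>space M. (\<forall>i\<le>n. z i \<omega> = l ! i) \<and> z (Suc n) \<omega> = l ! n + w}"
        using L_eq[OF True] by (auto simp: algebra_simps L_nth)
      have e2: "L n -` {l} \<inter> space M \<inter> space M = {\<omega>\<in>space M. (\<forall>i\<le>n. z i \<omega> = l ! i)}"
        using L_eq[OF True] by auto
      show ?thesis unfolding e1 e2 cyl[of n "\<lambda>i. l ! i"] lastl by simp
    next
      case False
      then have "L n -` {l} = {}" using L_length by (metis empty_iff set_eq_iff vimage_singleton_eq)
      then show ?thesis by simp
    qed
  qed
  also have "\<dots> = (\<integral>\<omega>. (\<Phi> (L n \<omega>) * ?q (L n \<omega>)) * indicator (space M) \<omega> \<partial>M)"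
    by (rule lemmaA[OF prob L_meas sets.top, symmetric])
  also have "\<dots> = (\<integral>\<omega>. \<Phi> (L n \<omega>) * pmf (Pk (z n \<omega>)) (z n \<omega> + w) \<partial>M)"
    by (rule Bochner_Integration.integral_cong) (auto simp: L_last)
  finally show ?thesis .
qed

lemma D_sum: "\<omega> \<in> space M \<Longrightarrow> D n \<omega> = (\<Sum>w\<in>W. real_of_int (alpha w) *
     (indicator {\<omega>\<in>space M. z (Suc n) \<omega> - z n \<omega> = w} \<omega> - pmf (Pk (z n \<omega>)) (z n \<omega> + w)))"
  unfolding D_def fD_def G_def
  by (simp add: algebra_simps sum_subtractf indicator_def)

lemma core:
  assumes bnd: "\<And>l. \<bar>\<Phi> l\<bar> \<le> B"
  shows "(\<integral>\<omega>. \<Phi> (L n \<omega>) * D n \<omega> \<partial>M) = 0"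
proof -
  let ?B = "\<lambda>w. {\<omega>\<in>space M. z (Suc n) \<omega> - z n \<omega> = w}"
  have i1: "integrable M (\<lambda>\<omega>. \<Phi> (L n \<omega>) * indicator (?B w) \<omega>)" for w
  proof -
    have "integrable M (\<lambda>\<omega>. indicator (?B w) \<omega> *\<^sub>R \<Phi> (L n \<omega>))"
      by (rule integrable_mult_indicator[OF Bw_sets fun_int[OF L_meas bnd]])
    then show ?thesis by (simp add: mult.commute)
  qed
  have i2: "integrable M (\<lambda>\<omega>. \<Phi> (L n \<omega>) * pmf (Pk (z n \<omega>)) (z n \<omega> + w))" for w
  proof -
    have "integrable M (\<lambda>\<omega>. (\<lambda>l. \<Phi> l * pmf (Pk (last l)) (last l + w)) (L n \<omega>))"
    proof (rule fun_int[OF L_meas])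
      fix l show "\<bar>\<Phi> l * pmf (Pk (last l)) (last l + w)\<bar> \<le> B"
        using bnd[of l] pmf_le_1[of "Pk (last l)"] 
        by (simp add: abs_mult) (metis abs_ge_zero mult_right_le_one_le pmf_nonneg order_trans)
    qed
    then show ?thesis by (simp add: L_last)
  qed
  have "(\<integral>\<omega>. \<Phi> (L n \<omega>) * D n \<omega> \<partial>M) = (\<integral>\<omega>. (\<Sum>w\<in>W. real_of_int (alpha w) *
     (\<Phi> (L n \<omega>) * indicator (?B w) \<omega> - \<Phi> (L n \<omega>) * pmf (Pk (z n \<omega>)) (z n \<omega> + w))) \<partial>M)"
    by (rule Bochner_Integration.integral_cong[OF refl]) (simp add: D_sum sum_distrib_left algebra_simps)
  also have "\<dots> = (\<Sum>w\<in>W. real_of_int (alpha w) *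
     ((\<integral>\<omega>. \<Phi> (L n \<omega>) * indicator (?B w) \<omega> \<partial>M) - (\<integral>\<omega>. \<Phi> (L n \<omega>) * pmf (Pk (z n \<omega>)) (z n \<omega> + w) \<partial>M)))"
    using i1 i2 by (simp add: integral_sum integral_diff)
  also have "\<dots> = 0" using key_w[of \<Phi> B, OF bnd] by simp
  finally show ?thesis .
qed

end


context mc begin

definition S :: "nat \<Rightarrow> 'a \<Rightarrow> real" where
  "S n \<omega> = (\<Sum>k<n. D k \<omega>)"

definition Sf :: "nat \<Rightarrow> (int ^ 'k) list \<Rightarrow> real" where
  "Sf n l = (\<Sum>k<n. fD (l ! k) (l ! Suc k) - G (l ! k))"

definition Dl :: "nat \<Rightarrow> (int ^ 'k) list \<Rightarrow> real" where
  "Dl n l = fD (l ! n) (l ! Suc n) - G (l ! n)"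

lemma S_L: "n \<le> m \<Longrightarrow> S n \<omega> = Sf n (L m \<omega>)"
  unfolding S_def Sf_def D_def by (intro sum.cong) (auto simp: L_nth)

lemma D_L: "Suc n \<le> m \<Longrightarrow> D n \<omega> = Dl n (L m \<omega>)"
  unfolding Dl_def D_def by (auto simp: L_nth)

abbreviation "c \<equiv> 2 * AA"

lemma c_nonneg: "0 \<le> c" using AA_nonneg by simp

lemma Sf_bound: "\<bar>Sf n l\<bar> \<le> n * c"
proof -
  have "\<bar>Sf n l\<bar> \<le> (\<Sum>k<n. \<bar>fD (l ! k) (l ! Suc k) - G (l ! k)\<bar>)"
    unfolding Sf_def by (rule sum_abs)
  also have "\<dots> \<le> (\<Sum>k<n. c)"
    by (rule sum_mono) (metis fD_bound G_bound abs_triangle_ineq4 add_mono order_trans mult_2)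
  finally show ?thesis by simp
qed

lemma Dl_bound: "\<bar>Dl n l\<bar> \<le> c"
  unfolding Dl_def by (metis fD_bound G_bound abs_triangle_ineq4 add_mono order_trans mult_2)

lemma S_bound: "\<bar>S n \<omega>\<bar> \<le> n * c"
  using S_L[of n n] Sf_bound by simp

lemma S_meas[measurable]: "S n \<in> borel_measurable M"
proof -
  have "(\<lambda>\<omega>. Sf n (L n \<omega>)) \<in> borel_measurable M" by (rule fun_meas[OF L_meas])
  moreover have "S n = (\<lambda>\<omega>. Sf n (L n \<omega>))" by (rule ext) (rule S_L, simp)
  ultimately show ?thesis by simp
qed

lemma D_meas[measurable]: "D n \<in> borel_measurable M"
proof -
  have "(\<lambda>\<omega>. Dl n (L (Suc n) \<omega>)) \<in> borel_measurable M" by (rule fun_meas[OF L_meas])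
  moreover have "D n = (\<lambda>\<omega>. Dl n (L (Suc n) \<omega>))" by (rule ext) (rule D_L, simp)
  ultimately show ?thesis by simp
qed

lemma S_pow_bound: "\<bar>S n \<omega> ^ j\<bar> \<le> (n * c) ^ j"
  unfolding power_abs by (rule power_mono) (auto simp: S_bound)

lemma bint: "f \<in> borel_measurable M \<Longrightarrow> (\<And>\<omega>. \<bar>f \<omega>\<bar> \<le> B) \<Longrightarrow> integrable M (f :: 'a \<Rightarrow> real)"
  by (rule integrable_const_bound[where B=B]) auto

lemma SD0: "(\<integral>\<omega>. S n \<omega> * D n \<omega> \<partial>M) = 0"
proof -
  have "(\<integral>\<omega>. Sf n (L n \<omega>) * D n \<omega> \<partial>M) = 0" by (rule core[OF Sf_bound])
  then show ?thesis using S_L[of n n] by simp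
qed

lemma S3D0: "(\<integral>\<omega>. S n \<omega> ^ 3 * D n \<omega> \<partial>M) = 0"
proof -
  have "\<bar>Sf n l ^ 3\<bar> \<le> (n * c) ^ 3" for l
    using Sf_bound[of n l] unfolding power_abs by (rule power_mono) auto
  then have "(\<integral>\<omega>. Sf n (L n \<omega>) ^ 3 * D n \<omega> \<partial>M) = 0" by (rule core)
  then show ?thesis using S_L[of n n] by simp
qed

lemma mom2: "(\<integral>\<omega>. S n \<omega> ^ 2 \<partial>M) \<le> n * c ^ 2"
proof (induction n)
  case 0 then show ?case by (simp add: S_def)
next
  case (Suc n)
  have Dsq: "D n \<omega> ^ 2 \<le> c ^ 2" for \<omega>
    using D_bound[of n \<omega>] by (metis abs_le_square_iff power2_abs abs_of_nonneg c_nonneg)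
  have iS2: "integrable M (\<lambda>\<omega>. S n \<omega> ^ 2)"
    by (rule bint[where B="(n*c)^2"]) (measurable, rule S_pow_bound)
  have iSD: "integrable M (\<lambda>\<omega>. S n \<omega> * D n \<omega>)"
    by (rule bint[where B="(n*c)*c"]) (measurable, unfold abs_mult, rule mult_mono[OF S_bound D_bound], use c_nonneg in auto)
  have iD2: "integrable M (\<lambda>\<omega>. D n \<omega> ^ 2)"
    by (rule bint[where B="c^2"]) (use Dsq in auto)
  have "(\<integral>\<omega>. S (Suc n) \<omega> ^ 2 \<partial>M) = (\<integral>\<omega>. S n \<omega> ^ 2 + 2 * (S n \<omega> * D n \<omega>) + D n \<omega> ^ 2 \<partial>M)"
    by (simp add: S_def power2_eq_square algebra_simps)
  also have "\<dots> = (\<integral>\<omega>. S n \<omega> ^ 2 \<partial>M) + 2 * (\<integral>\<omega>. S n \<omega> * D n \<omega> \<partial>M) + (\<integral>\<omega>. D n \<omega> ^ 2 \<partial>M)"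
    using iS2 iSD iD2 by simp
  also have "\<dots> \<le> n * c ^ 2 + 0 + c ^ 2"
    using Suc.IH SD0[of n] integral_mono[OF iD2 integrable_const[of "c^2"] Dsq] prob_space by simp
  finally show ?case by (simp add: algebra_simps)
qed

lemma pw4:
  fixes s d c n :: real
  assumes "\<bar>d\<bar> \<le> c" "\<bar>s\<bar> \<le> n * c" "0 \<le> c"
  shows "(s + d) ^ 4 \<le> s ^ 4 + 4 * (s ^ 3 * d) + 6 * c ^ 2 * s ^ 2 + 4 * n * c ^ 4 + c ^ 4"
proof -
  have e: "(s + d) ^ 4 = s ^ 4 + 4 * (s ^ 3 * d) + 6 * (s^2 * d^2) + 4 * (s * d ^ 3) + d ^ 4"
    by (simp add: power_def algebra_simps numeral_eq_Suc)
  have d2: "d ^ 2 \<le> c ^ 2" using assms by (metis abs_le_square_iff power2_abs abs_of_nonneg)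
  have a: "s^2 * d^2 \<le> c^2 * s^2" using d2 by (simp add: mult.commute mult_right_mono)
  have "\<bar>s * d ^ 3\<bar> \<le> (n * c) * c ^ 3"
    unfolding abs_mult power_abs using assms by (intro mult_mono power_mono) auto
  then have b: "s * d ^ 3 \<le> n * c ^ 4" by (simp add: power_def numeral_eq_Suc algebra_simps)
  have "d ^ 4 \<le> \<bar>d ^ 4\<bar>" by (rule abs_ge_self)
  also have "\<dots> = \<bar>d\<bar> ^ 4" by (rule power_abs)
  also have "\<dots> \<le> c ^ 4" using assms by (intro power_mono) auto
  finally have "d ^ 4 \<le> c ^ 4" .
  then show ?thesis using e a b by simp
qed

lemma mom4: "(\<integral>\<omega>. S n \<omega> ^ 4 \<partial>M) \<le> 11 * c ^ 4 * n ^ 2"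
proof (induction n)
  case 0 then show ?case by (simp add: S_def)
next
  case (Suc n)
  have iS4: "integrable M (\<lambda>\<omega>. S n \<omega> ^ 4)"
    by (rule bint[where B="(n*c)^4"]) (measurable, rule S_pow_bound)
  have iS2: "integrable M (\<lambda>\<omega>. S n \<omega> ^ 2)"
    by (rule bint[where B="(n*c)^2"]) (measurable, rule S_pow_bound)
  have iS3D: "integrable M (\<lambda>\<omega>. S n \<omega> ^ 3 * D n \<omega>)"
    by (rule bint[where B="(n*c)^3*c"]) (measurable, unfold abs_mult, rule mult_mono[OF S_pow_bound D_bound], use c_nonneg in auto)
  have iS'4: "integrable M (\<lambda>\<omega>. S (Suc n) \<omega> ^ 4)"
    by (rule bint[where B="(Suc n*c)^4"]) (measurable, rule S_pow_bound)
  have "(\<integral>\<omega>. S (Suc n) \<omega> ^ 4 \<partial>M) \<le>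
     (\<integral>\<omega>. S n \<omega> ^ 4 + 4 * (S n \<omega> ^ 3 * D n \<omega>) + 6 * c ^ 2 * S n \<omega> ^ 2 + 4 * n * c ^ 4 + c ^ 4 \<partial>M)"
  proof (rule integral_mono[OF iS'4])
    show "integrable M (\<lambda>\<omega>. S n \<omega> ^ 4 + 4 * (S n \<omega> ^ 3 * D n \<omega>) + 6 * c ^ 2 * S n \<omega> ^ 2 + 4 * n * c ^ 4 + c ^ 4)"
      using iS4 iS3D iS2 by simp
    fix \<omega>
    have "S (Suc n) \<omega> = S n \<omega> + D n \<omega>" by (simp add: S_def)
    then show "S (Suc n) \<omega> ^ 4 \<le> S n \<omega> ^ 4 + 4 * (S n \<omega> ^ 3 * D n \<omega>) + 6 * c ^ 2 * S n \<omega> ^ 2 + 4 * n * c ^ 4 + c ^ 4"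
      using pw4[OF D_bound[of n \<omega>] S_bound[of n \<omega>] c_nonneg] by simp
  qed
  also have "\<dots> = (\<integral>\<omega>. S n \<omega> ^ 4 \<partial>M) + 4 * (\<integral>\<omega>. S n \<omega> ^ 3 * D n \<omega> \<partial>M)
        + 6 * c ^ 2 * (\<integral>\<omega>. S n \<omega> ^ 2 \<partial>M) + 4 * n * c ^ 4 + c ^ 4"
    using iS4 iS3D iS2 prob_space by simp
  also have "\<dots> \<le> 11 * c ^ 4 * n ^ 2 + 0 + 6 * c ^ 2 * (n * c ^ 2) + 4 * n * c ^ 4 + c ^ 4"
    using Suc.IH S3D0[of n] mom2[of n] c_nonneg by (intro add_mono mult_left_mono) auto
  also have "\<dots> \<le> 11 * c ^ 4 * (Suc n) ^ 2"
  proof -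
    have "0 \<le> c ^ 4" using c_nonneg by simp
    then have "c^4 * (11 * n^2 + 10 * n + 1) \<le> c^4 * (11 * (Suc n)^2)"
      by (intro mult_left_mono) (auto simp: power2_eq_square algebra_simps)
    then show ?thesis by (simp add: power_def numeral_eq_Suc algebra_simps)
  qed
  finally show ?case .
qed

end


context mc begin

definition T :: "nat \<Rightarrow> 'a \<Rightarrow> real" where
  "T n \<omega> = S n \<omega> ^ 4 / real n ^ 4"

lemma T_nonneg: "0 \<le> T n \<omega>" unfolding T_def by simp

lemma T_meas[measurable]: "T n \<in> borel_measurable M" unfolding T_def by measurable

lemma T_int: "integrable M (T n)"
proof -
  have "integrable M (\<lambda>\<omega>. S n \<omega> ^ 4)"
    by (rule bint[where B="(n*c)^4"]) (measurable, rule S_pow_bound)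
  then show ?thesis unfolding T_def by simp
qed

lemma T_exp: "(\<integral>\<omega>. T n \<omega> \<partial>M) \<le> 11 * c ^ 4 * inverse (real n ^ 2)"
proof (cases "n = 0")
  case True then show ?thesis by (simp add: T_def)
next
  case False
  have "(\<integral>\<omega>. T n \<omega> \<partial>M) = (\<integral>\<omega>. S n \<omega> ^ 4 \<partial>M) / real n ^ 4"
    unfolding T_def by simp
  also have "\<dots> \<le> 11 * c ^ 4 * real n ^ 2 / real n ^ 4"
    using mom4[of n] by (intro divide_right_mono) auto
  also have "\<dots> = 11 * c ^ 4 * inverse (real n ^ 2)"
    using False by (simp add: field_simps power_def numeral_eq_Suc)
  finally show ?thesis .
qed

lemma AE_T: "AE \<omega> in M. summable (\<lambda>n. T n \<omega>)"
proof -
  let ?b = "\<lambda>n. 11 * c ^ 4 * inverse (real n ^ 2)"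
  have sb: "summable ?b"
    by (intro summable_mult inverse_power_summable) simp
  have "(\<integral>\<^sup>+\<omega>. (\<Sum>n. ennreal (T n \<omega>)) \<partial>M) = (\<Sum>n. (\<integral>\<^sup>+\<omega>. ennreal (T n \<omega>) \<partial>M))"
    by (rule nn_integral_suminf) measurable
  also have "\<dots> = (\<Sum>n. ennreal (\<integral>\<omega>. T n \<omega> \<partial>M))"
    by (intro suminf_cong nn_integral_eq_integral T_int) (simp add: T_nonneg)
  also have "\<dots> \<le> (\<Sum>n. ennreal (?b n))"
    by (intro suminf_le summableI ennreal_leI T_exp)
  also have "\<dots> = ennreal (\<Sum>n. ?b n)"
    using sb by (intro suminf_ennreal2) (auto simp: c_nonneg)
  finally have "(\<integral>\<^sup>+\<omega>. (\<Sum>n. ennreal (T n \<omega>)) \<partial>M) \<noteq> \<infinity>"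
    by (auto simp: top_unique)
  then have "AE \<omega> in M. (\<Sum>n. ennreal (T n \<omega>)) \<noteq> \<infinity>"
    by (intro nn_integral_PInf_AE) measurable
  then show ?thesis
    by eventually_elim (metis summable_suminf_not_top T_nonneg infinity_ennreal_def)
qed

lemma AE_S: "AE \<omega> in M. \<forall>e>0. eventually (\<lambda>n. \<bar>S n \<omega>\<bar> \<le> e * real n) sequentially"
  using AE_T
proof eventually_elim
  case (elim \<omega>)
  then have lim: "(\<lambda>n. T n \<omega>) \<longlonglongrightarrow> 0" by (rule summable_LIMSEQ_zero)
  show ?case
  proof (intro allI impI)
    fix e :: real assume e: "e > 0"
    then have "eventually (\<lambda>n. dist (T n \<omega>) 0 < e ^ 4) sequentially"
      using lim by (simp add: tendsto_iff)
    then show "eventually (\<lambda>n. \<bar>S n \<omega>\<bar> \<le> e * real n) sequentially"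
    proof eventually_elim
      case (elim n)
      show ?case
      proof (cases "n = 0")
        case True then show ?thesis by (simp add: S_def)
      next
        case False
        have eq: "(\<bar>S n \<omega>\<bar> / real n) ^ 4 = T n \<omega>"
          unfolding T_def power_divide by simp
        show ?thesis
        proof (rule ccontr)
          assume "\<not> \<bar>S n \<omega>\<bar> \<le> e * real n"
          then have "e < \<bar>S n \<omega>\<bar> / real n" using False by (simp add: field_simps)
          then have "e ^ 4 < (\<bar>S n \<omega>\<bar> / real n) ^ 4"
            using e by (intro power_strict_mono) auto
          then show False using elim eq T_nonneg[of n \<omega>] by simp
        qed
      qed
    qed
  qed
qed

end


lemma l1_Zplus: "y \<in> Zplus \<Longrightarrow> l1 y = alpha y"
  unfolding l1_def alpha_def Zplus_def by simp

lemma alpha_diff: "alpha (y' - y) = alpha y' - alpha y"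
  unfolding alpha_def by (simp add: sum_subtractf)

lemma l1_zero: "l1 (0 :: int ^ 'k::finite) = 0" unfolding l1_def by simp

lemma distr_Sk:
  fixes y :: "int ^ 'k::finite"
  assumes "y \<in> Zplus" "y \<noteq> 0"
  shows "distr y \<in> Sk" "l1 y > 0"
proof -
  have nn: "\<And>i. 0 \<le> y $ i" using assms(1) unfolding Zplus_def by auto
  obtain i where "y $ i \<noteq> 0" using assms(2) by (metis vec_eq_iff zero_index)
  then have "0 < y $ i" using nn[of i] by simp
  moreover have "y $ i \<le> l1 y" unfolding l1_def
    using member_le_sum[of i UNIV "\<lambda>i. \<bar>y $ i\<bar>"] by simp
  ultimately show pos: "l1 y > 0" by simp
  have "(\<Sum>i\<in>UNIV. real_of_int (y $ i) / real_of_int (l1 y)) = (\<Sum>i\<in>UNIV. real_of_int (y $ i)) / real_of_int (l1 y)"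
    by (simp add: sum_divide_distrib)
  also have "(\<Sum>i\<in>UNIV. real_of_int (y $ i)) = real_of_int (l1 y)"
    unfolding l1_def using nn by simp
  finally show "distr y \<in> Sk"
    unfolding Sk_def distr_def using assms(2) pos nn by auto
qed

lemma compact_Sk: "compact (Sk :: (real ^ 'k::finite) set)"
unfolding compact_eq_bounded_closed
proof
  show "bounded (Sk :: (real ^ 'k) set)"
    unfolding bounded_iff
  proof (intro exI ballI)
    fix x :: "real ^ 'k" assume x: "x \<in> Sk"
    have "norm x \<le> (\<Sum>i\<in>UNIV. \<bar>x $ i\<bar>)" by (rule norm_le_l1_cart)
    also have "\<dots> = 1" using x unfolding Sk_def by simp
    finally show "norm x \<le> 1" .
  qed
  have "Sk = (\<Inter>i. {x :: real ^ 'k. 0 \<le> x $ i}) \<inter> {x. (\<Sum>i\<in>UNIV. x $ i) = 1}"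
    unfolding Sk_def by auto
  also have "closed \<dots>"
    by (intro closed_Int closed_INT ballI closed_Collect_le closed_Collect_eq continuous_intros)
  finally show "closed (Sk :: (real ^ 'k) set)" .
qed

lemma finite_steps: "finite (steps m :: (int ^ 'k::finite) set)"
proof -
  have "steps m \<subseteq> (\<lambda>f. \<chi> i. f i) ` (PiE (UNIV :: 'k set) (\<lambda>_. {- int m..int m}))"
  proof
    fix w :: "int ^ 'k" assume w: "w \<in> steps m"
    have "\<bar>w $ i\<bar> \<le> int m" for i
      using member_le_sum[of i UNIV "\<lambda>i. \<bar>w $ i\<bar>"] w unfolding steps_def l1_def by simp
    then have "(\<lambda>i. w $ i) \<in> PiE UNIV (\<lambda>_. {- int m..int m})" by (auto simp: abs_le_iff minus_le_iff)
    then show "w \<in> (\<lambda>f. \<chi> i. f i) ` (PiE (UNIV :: 'k set) (\<lambda>_. {- int m..int m}))"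
      by (metis image_eqI vec_lambda_eta)
  qed
  moreover have "finite (PiE (UNIV :: 'k set) (\<lambda>_. {- int m..int m}))"
    by (intro finite_PiE) auto
  ultimately show ?thesis by (metis finite_surj)
qed

lemma eventually_phi:
  fixes x :: "nat \<Rightarrow> real ^ 'k::finite" and \<phi> :: "real ^ 'k \<Rightarrow> real"
  assumes cont: "continuous_on Sk \<phi>" and inS: "\<forall>k\<ge>N0. x k \<in> Sk"
    and lp: "limit_points x \<subseteq> K" and lo: "\<And>y. y \<in> K \<Longrightarrow> lam \<le> \<phi> y" and e: "e > 0"
  shows "eventually (\<lambda>k. lam - e < \<phi> (x k)) sequentially"
proof (rule ccontr)
  assume "\<not> ?thesis"
  then have fr: "\<forall>N. \<exists>n\<ge>N. \<phi> (x n) \<le> lam - e"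
    unfolding not_eventually frequently_sequentially by (meson not_less)
  let ?A = "{k. N0 \<le> k \<and> \<phi> (x k) \<le> lam - e}"
  have "infinite ?A"
    unfolding infinite_nat_iff_unbounded_le using fr by (metis (mono_tags, lifting) mem_Collect_eq max.cobounded1 max.cobounded2 order_trans)
  then obtain r :: "nat \<Rightarrow> nat" where r: "strict_mono r" "\<And>n. r n \<in> ?A"
    using infinite_enumerate by blast
  have "seq_compact (Sk :: (real ^ 'k) set)" by (rule compact_imp_seq_compact[OF compact_Sk])
  moreover have "\<forall>n. (x \<circ> r) n \<in> Sk" using r inS by auto
  ultimately obtain l r' where l: "l \<in> Sk" "strict_mono r'" "((x \<circ> r) \<circ> r') \<longlonglongrightarrow> l"
    unfolding seq_compact_def by metis
  have "strict_mono (r \<circ> r')" using r(1) l(2) by (rule strict_mono_o)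
  then have "l \<in> limit_points x" unfolding limit_points_def using l(3) by (auto simp: o_assoc)
  then have "lam \<le> \<phi> l" using lp lo by auto
  have "(\<lambda>n. \<phi> (((x \<circ> r) \<circ> r') n)) \<longlonglongrightarrow> \<phi> l"
    using cont l(3) l(1) by (rule continuous_on_tendsto_compose) (use r inS in auto)
  moreover have "\<forall>n. \<phi> (((x \<circ> r) \<circ> r') n) \<le> lam - e" using r(2) by auto
  ultimately have "\<phi> l \<le> lam - e" by (intro LIMSEQ_le_const2) auto
  with \<open>lam \<le> \<phi> l\<close> e show False by simp
qed



context mc begin
lemma fD_eq: "y' - y \<in> W \<Longrightarrow> fD y y' = real_of_int (alpha (y' - y))"
proof -
  assume d: "y' - y \<in> W"
  have "fD y y' = (\<Sum>w\<in>W. if y' - y = w then real_of_int (alpha w) else 0)"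
    unfolding fD_def by (intro sum.cong) (auto simp: indicator_def)
  also have "\<dots> = real_of_int (alpha (y' - y))" using d finW by (simp add: sum.delta')
  finally show ?thesis .
qed

lemma X_sum:
  assumes zp: "\<forall>n. z n \<omega> \<in> Zplus" and st: "\<forall>n. z (Suc n) \<omega> - z n \<omega> \<in> W"
  shows "real_of_int (l1 (z n \<omega>)) = real_of_int (l1 (z 0 \<omega>)) + S n \<omega> + (\<Sum>k<n. G (z k \<omega>))"
proof (induction n)
  case 0 then show ?case by (simp add: S_def)
next
  case (Suc n)
  have "l1 (z (Suc n) \<omega>) - l1 (z n \<omega>) = alpha (z (Suc n) \<omega> - z n \<omega>)"
    using zp by (simp add: l1_Zplus alpha_diff)
  then have "real_of_int (l1 (z (Suc n) \<omega>)) = real_of_int (l1 (z n \<omega>)) + fD (z n \<omega>) (z (Suc n) \<omega>)"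
    using fD_eq[OF st[rule_format, of n]] by simp
  then show ?case using Suc by (simp add: S_def D_def)
qed
end

theorem proposition1:
  fixes M :: "'a measure"
    and z :: "nat \<Rightarrow> 'a \<Rightarrow> int ^ 'k::finite"
    and Pk :: "int ^ 'k \<Rightarrow> (int ^ 'k) pmf"
    and m :: nat
    and p :: "int ^ 'k \<Rightarrow> real ^ 'k \<Rightarrow> real"
    and K :: "(real ^ 'k) set"
  assumes m: "m \<ge> 1"
    and chain: "markov_chain M z Pk"
    and kernel: "\<forall>y\<in>Zplus. set_pmf (Pk y) \<subseteq> Zplus"
    and state: "AE \<omega> in M. \<forall>n. z n \<omega> \<in> Zplus"
    and A1: "AE \<omega> in M. \<forall>n. l1 (z (Suc n) \<omega> - z n \<omega>) \<le> int m"
    and p_range: "\<forall>w\<in>steps m. \<forall>x\<in>Sk. p w x \<in> {0..1}"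
    and p_lip: "\<forall>w\<in>steps m. \<exists>C. C-lipschitz_on Sk (p w)"
    and A2: "\<exists>a>0. \<forall>y\<in>Zplus. y \<noteq> 0 \<longrightarrow> (\<forall>w\<in>steps m.
               \<bar>p w (distr y) - pmf (Pk y) (y + w)\<bar> \<le> a / real_of_int (l1 y))"
    and K: "compact K" "K \<subseteq> Sk"
    and lam: "(INF x\<in>K. \<Sum>w\<in>steps m. p w x * real_of_int (alpha w)) > 0"
  shows "AE \<omega> in M.
           (limit_points (\<lambda>n. distr (z n \<omega>)) \<subseteq> K \<and>
            filterlim (\<lambda>n. real_of_int (l1 (z n \<omega>))) at_top sequentially)
           \<longrightarrow> ereal (INF x\<in>K. \<Sum>w\<in>steps m. p w x * real_of_int (alpha w))
                 \<le> liminf (\<lambda>n. ereal (real_of_int (l1 (z n \<omega>)) / real n))"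
proof -
  interpret mc M z Pk "steps m"
    by unfold_locales (rule chain, rule finite_steps)
  obtain a where a: "a > 0" and A2': "\<And>(y :: int ^ 'k) (w :: int ^ 'k). y \<in> Zplus \<Longrightarrow> y \<noteq> 0 \<Longrightarrow> w \<in> steps m \<Longrightarrow>
      \<bar>p w (distr y) - pmf (Pk y) (y + w)\<bar> \<le> a / real_of_int (l1 y)"
    using A2 by blast
  define \<phi> where "\<phi> x = (\<Sum>w\<in>steps m. p w x * real_of_int (alpha w))" for x
  have lam_eq: "(INF x\<in>K. \<Sum>w\<in>steps m. p w x * real_of_int (alpha w)) = (INF x\<in>K. \<phi> x)"
    by (simp add: \<phi>_def)
  have cont: "continuous_on Sk \<phi>"
    unfolding \<phi>_def
  proof (intro continuous_on_sum continuous_on_mult_right)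
    fix w :: "int ^ 'k" assume "w \<in> steps m"
    then obtain C where "C-lipschitz_on Sk (p w)" using p_lip by blast
    then show "continuous_on Sk (p w)" by (rule lipschitz_on_continuous_on)
  qed
  have "compact (\<phi> ` K)"
    using K by (intro compact_continuous_image continuous_on_subset[OF cont])
  then have bdd: "bdd_below (\<phi> ` K)" by (intro bounded_imp_bdd_below compact_imp_bounded)
  have lo: "\<And>y. y \<in> K \<Longrightarrow> (INF x\<in>K. \<phi> x) \<le> \<phi> y" using bdd by (rule cINF_lower)
  have Glow: "\<phi> (distr y) - a / real_of_int (l1 y) * AA \<le> G y" if y: "y \<in> Zplus" "y \<noteq> 0" for y
  proof -
    have "G y - \<phi> (distr y) = (\<Sum>w\<in>steps m. (pmf (Pk y) (y + w) - p w (distr y)) * real_of_int (alpha w))"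
      unfolding G_def \<phi>_def by (simp add: sum_subtractf algebra_simps)
    also have "\<dots> \<ge> - (\<Sum>w\<in>(steps m :: (int ^ 'k) set). a / real_of_int (l1 y) * \<bar>real_of_int (alpha w)\<bar>)"
    proof -
      have "\<bar>\<Sum>w\<in>steps m. (pmf (Pk y) (y + w) - p w (distr y)) * real_of_int (alpha w)\<bar>
          \<le> (\<Sum>w\<in>steps m. \<bar>(pmf (Pk y) (y + w) - p w (distr y)) * real_of_int (alpha w)\<bar>)"
        by (rule sum_abs)
      also have "\<dots> \<le> (\<Sum>w\<in>(steps m :: (int ^ 'k) set). a / real_of_int (l1 y) * \<bar>real_of_int (alpha w)\<bar>)"
      proof (rule sum_mono)
        fix w :: "int ^ 'k" assume "w \<in> steps m"
        then have "\<bar>pmf (Pk y) (y + w) - p w (distr y)\<bar> \<le> a / real_of_int (l1 y)"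
          using A2'[OF y] by (simp add: abs_minus_commute)
        then show "\<bar>(pmf (Pk y) (y + w) - p w (distr y)) * real_of_int (alpha w)\<bar> \<le> a / real_of_int (l1 y) * \<bar>real_of_int (alpha w)\<bar>"
          unfolding abs_mult by (rule mult_right_mono) simp
      qed
      finally show ?thesis by linarith
    qed
    finally show ?thesis unfolding AA_def by (simp add: sum_distrib_left)
  qed
  show ?thesis
    using state A1 AE_S
  proof eventually_elim
    case (elim \<omega>)
    note zp = elim(1) and st0 = elim(2) and Sev = elim(3)
    have st: "\<forall>n. z (Suc n) \<omega> - z n \<omega> \<in> steps m" using st0 by (simp add: steps_def)
    let ?X = "\<lambda>n. real_of_int (l1 (z n \<omega>))"
    have Xs: "\<And>n. ?X n = ?X 0 + S n \<omega> + (\<Sum>k<n. G (z k \<omega>))"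
      using X_sum[OF zp st] by blast
    have X0: "0 \<le> ?X 0" unfolding l1_def by (simp add: sum_nonneg)
    show ?case
    proof (intro impI)
      assume ev: "limit_points (\<lambda>n. distr (z n \<omega>)) \<subseteq> K \<and> filterlim ?X at_top sequentially"
      define lam where "lam = (INF x\<in>K. \<phi> x)"
      show "ereal (INF x\<in>K. \<Sum>w\<in>steps m. p w x * real_of_int (alpha w))
                 \<le> liminf (\<lambda>n. ereal (?X n / real n))"
        unfolding lam_eq lam_def[symmetric] le_Liminf_iff
      proof (intro allI impI)
        fix y :: ereal assume y: "y < ereal lam"
        show "eventually (\<lambda>n. y < ereal (?X n / real n)) sequentially"
        proof (cases y)
          case MInf then show ?thesis by simp
        next
          case PInf then show ?thesis using y by simp
        next
          case (real r)
          then have r: "r < lam" using y by simp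
          define e where "e = (lam - r) / 5"
          have e: "e > 0" using r by (simp add: e_def)
          define C where "C = AA + \<bar>lam - 2 * e\<bar>"
          have C: "C \<ge> 0" using AA_nonneg by (simp add: C_def)
          have "eventually (\<lambda>k. max 1 (a * AA / e) \<le> ?X k) sequentially"
            using ev unfolding filterlim_at_top by blast
          then obtain N0 where N0: "\<And>k. k \<ge> N0 \<Longrightarrow> max 1 (a * AA / e) \<le> ?X k"
            by (auto simp: eventually_sequentially)
          have nz: "z k \<omega> \<noteq> 0" if "k \<ge> N0" for k
            using N0[OF that] by (auto simp: l1_zero)
          have "eventually (\<lambda>k. lam - e < \<phi> (distr (z k \<omega>))) sequentially"
            unfolding lam_def
            by (rule eventually_phi[OF cont, of N0 "\<lambda>k. distr (z k \<omega>)" K, OF _ _ lo e]) (use nz zp distr_Sk ev in auto)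
          then obtain N1 where N1: "\<And>k. k \<ge> N1 \<Longrightarrow> lam - e < \<phi> (distr (z k \<omega>))"
            by (auto simp: eventually_sequentially)
          define N where "N = max N0 N1"
          have Gk: "lam - 2 * e \<le> G (z k \<omega>)" if k: "k \<ge> N" for k
          proof -
            have k0: "k \<ge> N0" and k1: "k \<ge> N1" using k by (auto simp: N_def)
            have Xk: "a * AA / e \<le> ?X k" "1 \<le> ?X k" using N0[OF k0] by auto
            have "a / ?X k * AA \<le> e"
            proof -
              have "a * AA \<le> e * ?X k" using Xk(1) e by (simp add: field_simps)
              then show ?thesis using Xk(2) by (simp add: field_simps)
            qed
            then show ?thesis using Glow[OF zp[rule_format] nz[OF k0]] N1[OF k1] by linarith
          qed
          have Gk': "(lam - 2 * e) - (if k \<in> {..<N} then C else 0) \<le> G (z k \<omega>)" for k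
          proof (cases "k < N")
            case True then show ?thesis using G_bound[of "z k \<omega>"] by (simp add: C_def)
          next
            case False then show ?thesis using Gk[of k] by simp
          qed
          have sumG: "real n * (lam - 2 * e) - real N * C \<le> (\<Sum>k<n. G (z k \<omega>))" for n
          proof -
            have "(\<Sum>k<n. (if k \<in> {..<N} then C else 0)) = (\<Sum>k\<in>{..<n} \<inter> {..<N}. C)"
              by (rule sum.inter_restrict[symmetric]) simp
            also have "\<dots> = real (card ({..<n} \<inter> {..<N})) * C" by simp
            also have "\<dots> \<le> real N * C"
              using C card_mono[of "{..<N}" "{..<n} \<inter> {..<N}"] by (intro mult_right_mono) auto
            finally have s: "(\<Sum>k<n. (if k \<in> {..<N} then C else 0)) \<le> real N * C" .
            have "(\<Sum>k<n. (lam - 2 * e) - (if k \<in> {..<N} then C else 0)) \<le> (\<Sum>k<n. G (z k \<omega>))"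
              by (rule sum_mono) (rule Gk')
            then show ?thesis using s by (simp add: sum_subtractf)
          qed
          obtain N3 where N3: "\<And>n. n \<ge> N3 \<Longrightarrow> \<bar>S n \<omega>\<bar> \<le> e * real n"
            using Sev e by (auto simp: eventually_sequentially)
          define N4 where "N4 = max N3 (nat \<lceil>real N * C / e\<rceil> + 1)"
          show ?thesis unfolding eventually_sequentially
          proof (intro exI allI impI)
            fix n assume n: "N4 \<le> n"
            have n3: "n \<ge> N3" using n by (simp add: N4_def)
            have "real (nat \<lceil>real N * C / e\<rceil> + 1) \<le> real n" using n by (simp add: N4_def)
            then have "real N * C / e < real n" by linarith
            then have nC: "real N * C < e * real n" using e by (simp add: field_simps)
            have "0 \<le> real N * C" using C by simp
            then have en: "0 < e * real n" using nC by linarith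
            then have npos: "real n > 0" using e by (simp add: zero_less_mult_iff)
            have "?X n \<ge> 0 - e * real n + (real n * (lam - 2 * e) - real N * C)"
              using Xs[of n] X0 N3[OF n3] sumG[of n] by linarith
            moreover have "real n * (lam - 2 * e) = real n * lam - 2 * (e * real n)"
              by (simp add: algebra_simps)
            moreover have "r * real n = real n * lam - 5 * (e * real n)"
              unfolding e_def by (simp add: field_simps)
            ultimately have "r * real n < ?X n" using nC en by linarith
            then have "r < ?X n / real n" using npos by (simp add: field_simps)
            then show "y < ereal (?X n / real n)" using real by simp
          qed
        qed
      qed
    qed
  qed
qed


end
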